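(* Let $n\ge2$, $N\ge0$ an integer, $0\le\alpha_0<\alpha_1<\dots<\alpha_N$ real numbers, $\bar A_0,\dots,\bar A_N$ real $n\times n$ matrices, and for each $k$ let $F_k$ be either $F_{\bar A_k,\alpha_k}$ or (only when $\bar A_k$ is symmetric positive definite) $\widetilde F_{\bar A_k,\alpha_k}$. Let $A_1,\dots,A_n$ be nonzero $n\times n$ matrices and $G_B$ as in the context. Let $F:\mathbb R^n\to\mathbb R^n$ be one of: (1) $F=G_B$; (2) $F=\sum_{k=0}^NF_k$; (3) $F=\sum_{k=0}^NF_k+G_B$. Assume: (a) in case (1), $G_B$ is $3$-monotone; (b) in case (2), $F_k$ is monotone for $0\le k\le N-1$, $\alpha_N>0$, and $F_N$ is $(\alpha_N+2)$-monotone; (c) in case (3), all $F_k$ and $G_B$ are monotone, and moreover: if $\alpha_N<1$ then $G_B$ is $3$-monotone; if $\alpha_N>1$ then $F_N$ is $(\alpha_N+2)$-monotone; if $\alpha_N=1$ then $F_N$ or $G_B$ is $3$-monotone. Let $\beta=1$ in case (1), $\beta=\alpha_N$ in case (2), $\beta=\max\{\alpha_N,1\}$ in case (3). Then there are $c_1,c_2>0$ such that for all $u,v\in\mathbb R^n$, $$|F(u)-F(v)|\le c_1(1+|u|^\beta+|v|^\beta)|u-v|,\qquad (F(u)-F(v))\cdot(u-v)\ge c_2|u-v|^{\beta+2}.$$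
   Context: $|\cdot|$ is the Euclidean norm. $F_{A,\alpha}(u)=|u|^\alpha Au$ for $\alpha>0$ and $F_{A,0}(u)=Au$; for symmetric positive definite $A$, $\widetilde F_{A,\alpha}(u)=|A^{1/2}u|^\alpha Au$ for $\alpha>0$ and $\widetilde F_{A,0}(u)=Au$. $B(u,v,w)=\mathrm{diag}[u^TA_1v,\dots,u^TA_nv]\,w$; $G_B(0)=0$ and $G_B(u)=B(u,u,u)/|u|$ for $u\ne0$. A map $F$ is monotone if $(F(u)-F(v))\cdot(u-v)\ge0$ for all $u,v$; for $\gamma>0$ it is $\gamma$-monotone if there is $C>0$ with $(F(u)-F(v))\cdot(u-v)\ge C|u-v|^\gamma$ for all $u,v$. *)

theory Defs
  imports "HOL-Analysis.Analysis"
begin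

definition sym_pos_def :: "real^'n^'n \<Rightarrow> bool" where
  "sym_pos_def A \<longleftrightarrow> transpose A = A \<and> (\<forall>x. x \<noteq> 0 \<longrightarrow> x \<bullet> (A *v x) > 0)"

definition mat_sqrt :: "real^'n^'n \<Rightarrow> real^'n^'n" where
  "mat_sqrt A = (THE S. sym_pos_def S \<and> S ** S = A)"

definition F_map :: "real^'n^'n \<Rightarrow> real \<Rightarrow> real^'n \<Rightarrow> real^'n" where
  "F_map A \<alpha> u = (if \<alpha> > 0 then norm u powr \<alpha> *\<^sub>R (A *v u) else A *v u)"

definition Ft_map :: "real^'n^'n \<Rightarrow> real \<Rightarrow> real^'n \<Rightarrow> real^'n" where
  "Ft_map A \<alpha> u = (if \<alpha> > 0 then norm (mat_sqrt A *v u) powr \<alpha> *\<^sub>R (A *v u) else A *v u)"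

definition B_map :: "('n \<Rightarrow> real^'n^'n) \<Rightarrow> real^'n \<Rightarrow> real^'n \<Rightarrow> real^'n \<Rightarrow> real^'n" where
  "B_map As u v w = (\<chi> i. (u \<bullet> (As i *v v)) * w $ i)"

definition G_B :: "('n \<Rightarrow> real^'n^'n) \<Rightarrow> real^'n \<Rightarrow> real^'n" where
  "G_B As u = (if u = 0 then 0 else (1 / norm u) *\<^sub>R B_map As u u u)"

definition monotone_map :: "(real^'n \<Rightarrow> real^'n) \<Rightarrow> bool" where
  "monotone_map F \<longleftrightarrow> (\<forall>u v. (F u - F v) \<bullet> (u - v) \<ge> 0)"

definition gamma_monotone :: "real \<Rightarrow> (real^'n \<Rightarrow> real^'n) \<Rightarrow> bool" where
  "gamma_monotone \<gamma> F \<longleftrightarrow> (\<exists>C>0. \<forall>u v. (F u - F v) \<bullet> (u - v) \<ge> C * norm (u - v) powr \<gamma>)"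

end

theory Submission imports Defs begin


lemma bern_nat:
  fixes t :: real assumes "0 \<le> t" "t \<le> 1"
  shows "1 - real m * (1 - t) \<le> t ^ m"
proof (induction m)
  case 0 then show ?case by simp
next
  case (Suc m)
  have "t ^ Suc m = t * t ^ m" by simp
  also have "\<dots> \<ge> t * (1 - real m * (1 - t))" using Suc assms by (simp add: mult_left_mono)
  also have "t * (1 - real m * (1 - t)) = 1 - real (Suc m) * (1 - t) + real m * (1 - t) * (1 - t)"
    by (simp add: algebra_simps)
  finally have "t ^ Suc m \<ge> 1 - real (Suc m) * (1 - t) + real m * (1 - t) * (1 - t)" .
  moreover have "0 \<le> real m * (1 - t) * (1 - t)" using assms by simp
  ultimately show ?case by linarith
qed

lemma scal_S:
  fixes t \<alpha> :: real assumes "0 \<le> t" "t \<le> 1" "\<alpha> > 0"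
  shows "1 - t powr \<alpha> \<le> (1 + \<alpha>) * (1 - t)"
proof (cases "t = 0")
  case True then show ?thesis using assms by simp
next
  case False
  define m where "m = nat \<lceil>\<alpha>\<rceil>"
  have m1: "real m \<ge> \<alpha>" "real m \<le> \<alpha> + 1" proof -
    have "real m = of_int \<lceil>\<alpha>\<rceil>" unfolding m_def using assms(3) by simp
    then show "real m \<ge> \<alpha>" "real m \<le> \<alpha> + 1" by linarith+
  qed
  have "t powr \<alpha> \<ge> t powr real m"
    using False assms m1 by (intro powr_mono') auto
  also have "t powr real m = t ^ m" using False assms by (simp add: powr_realpow)
  finally have "t powr \<alpha> \<ge> 1 - real m * (1 - t)" using bern_nat[OF assms(1,2), of m] by linarith
  moreover have "real m * (1 - t) \<le> (1 + \<alpha>) * (1 - t)" using m1 assms by (intro mult_right_mono) auto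
  ultimately show ?thesis by linarith
qed

lemma scal_ab:
  fixes a b \<alpha> :: real assumes "0 \<le> b" "b \<le> a" "\<alpha> > 0"
  shows "(a powr \<alpha> - b powr \<alpha>) * b \<le> (1 + \<alpha>) * a powr \<alpha> * (a - b)"
proof (cases "a = 0")
  case True then show ?thesis using assms by simp
next
  case False
  hence a0: "a > 0" using assms by simp
  define t where "t = b / a"
  have t: "0 \<le> t" "t \<le> 1" unfolding t_def using assms a0 by auto
  have bt: "b = t * a" unfolding t_def using a0 by simp
  have "b powr \<alpha> = t powr \<alpha> * a powr \<alpha>" unfolding bt using t a0 by (simp add: powr_mult)
  hence "(a powr \<alpha> - b powr \<alpha>) * b = a powr \<alpha> * a * (t * (1 - t powr \<alpha>))"
    unfolding bt by (simp add: algebra_simps)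
  also have "\<dots> \<le> a powr \<alpha> * a * ((1 + \<alpha>) * (1 - t))"
  proof (rule mult_left_mono)
    have "t powr \<alpha> \<le> 1" using t assms by (simp add: powr_le1)
    hence "t * (1 - t powr \<alpha>) \<le> 1 - t powr \<alpha>" using t by (simp add: mult_left_le_one_le)
    then show "t * (1 - t powr \<alpha>) \<le> (1 + \<alpha>) * (1 - t)" using scal_S[OF t assms(3)] by linarith
  qed (use a0 in auto)
  also have "\<dots> = (1 + \<alpha>) * a powr \<alpha> * (a - b)" unfolding bt by (simp add: algebra_simps)
  finally show ?thesis .
qed

lemma g_bound_aux:
  fixes u v :: "real^'n" assumes "\<alpha> > 0" "norm v \<le> norm u"
  shows "norm (norm u powr \<alpha> *\<^sub>R u - norm v powr \<alpha> *\<^sub>R v) \<le> (2 + \<alpha>) * (norm u powr \<alpha> + norm v powr \<alpha>) * norm (u - v)"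
proof -
  let ?a = "norm u" and ?b = "norm v"
  have "norm u powr \<alpha> *\<^sub>R u - norm v powr \<alpha> *\<^sub>R v = ?a powr \<alpha> *\<^sub>R (u - v) + (?a powr \<alpha> - ?b powr \<alpha>) *\<^sub>R v"
    by (simp add: algebra_simps)
  hence "norm (norm u powr \<alpha> *\<^sub>R u - norm v powr \<alpha> *\<^sub>R v) \<le> ?a powr \<alpha> * norm (u - v) + \<bar>?a powr \<alpha> - ?b powr \<alpha>\<bar> * ?b"
    by (metis (no_types, lifting) norm_scaleR norm_triangle_ineq abs_of_nonneg powr_ge_zero)
  also have "\<bar>?a powr \<alpha> - ?b powr \<alpha>\<bar> = ?a powr \<alpha> - ?b powr \<alpha>"
    using assms by (simp add: powr_mono2)
  also have "(?a powr \<alpha> - ?b powr \<alpha>) * ?b \<le> (1 + \<alpha>) * ?a powr \<alpha> * (?a - ?b)"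
    using scal_ab[of ?b ?a \<alpha>] assms by simp
  also have "?a - ?b \<le> norm (u - v)" by (rule norm_triangle_ineq2)
  hence "(1 + \<alpha>) * ?a powr \<alpha> * (?a - ?b) \<le> (1 + \<alpha>) * ?a powr \<alpha> * norm (u - v)"
    using assms by (intro mult_left_mono) auto
  finally have "norm (norm u powr \<alpha> *\<^sub>R u - norm v powr \<alpha> *\<^sub>R v) \<le> (2 + \<alpha>) * ?a powr \<alpha> * norm (u - v)"
    by (simp add: algebra_simps)
  also have "\<dots> \<le> (2 + \<alpha>) * (?a powr \<alpha> + ?b powr \<alpha>) * norm (u - v)"
    using assms by (intro mult_right_mono mult_left_mono) auto
  finally show ?thesis .
qed

lemma g_bound:
  fixes u v :: "real^'n" assumes "\<alpha> > 0"
  shows "norm (norm u powr \<alpha> *\<^sub>R u - norm v powr \<alpha> *\<^sub>R v) \<le> (2 + \<alpha>) * (norm u powr \<alpha> + norm v powr \<alpha>) * norm (u - v)"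
proof (cases "norm v \<le> norm u")
  case True then show ?thesis using g_bound_aux assms by blast
next
  case False
  then show ?thesis using g_bound_aux[OF assms, of u v]
    by (metis add.commute linear norm_minus_commute)
qed



lemma sym_inner:
  fixes A :: "real^'n^'n" assumes "transpose A = A"
  shows "x \<bullet> (A *v y) = (A *v x) \<bullet> y"
proof -
  have "x \<bullet> (A *v y) = (x v* A) \<bullet> y" by (simp add: dot_lmul_matrix)
  also have "x v* A = A *v x" by (metis assms vector_transpose_matrix)
  finally show ?thesis .
qed

lemma inner_all_eq:
  fixes a b :: "'a::real_inner" assumes "\<And>y. y \<bullet> a = y \<bullet> b" shows "a = b"
proof -
  have "(a - b) \<bullet> (a - b) = 0" using assms[of "a - b"] by (simp add: inner_diff_right)
  thus ?thesis by simp
qed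

definition oeig :: "real^'n^'n \<Rightarrow> (real^'n) set \<Rightarrow> bool" where
  "oeig A E \<longleftrightarrow> finite E \<and> (\<forall>e\<in>E. norm e = 1 \<and> A *v e = (e \<bullet> (A *v e)) *\<^sub>R e)
     \<and> (\<forall>e\<in>E. \<forall>e'\<in>E. e \<noteq> e' \<longrightarrow> e \<bullet> e' = 0)"

lemma oeig_inner_sum:
  assumes "oeig A E" "e \<in> E"
  shows "e \<bullet> (\<Sum>e'\<in>E. c e' *\<^sub>R e') = c e"
proof -
  have "e \<bullet> (\<Sum>e'\<in>E. c e' *\<^sub>R e') = (\<Sum>e'\<in>E. c e' * (e \<bullet> e'))"
    by (simp add: inner_sum_right)
  also have "\<dots> = (\<Sum>e'\<in>E. if e' = e then c e else 0)"
  proof (rule sum.cong)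
    fix e' assume "e' \<in> E"
    then show "c e' * (e \<bullet> e') = (if e' = e then c e else 0)"
      using assms unfolding oeig_def by (auto simp: norm_eq_1)
  qed simp
  also have "\<dots> = c e" using assms unfolding oeig_def by simp
  finally show ?thesis .
qed

lemma oeig_card:
  fixes A :: "real^'n^'n"
  assumes "oeig A E" shows "card E \<le> CARD('n)"
proof -
  have "pairwise orthogonal E" using assms unfolding oeig_def pairwise_def orthogonal_def by blast
  moreover have "0 \<notin> E" using assms unfolding oeig_def by force
  ultimately have "independent E" by (rule pairwise_orthogonal_independent)
  from independent_bound[OF this] show ?thesis by simp
qed

lemma quad_zero:
  fixes a d :: real assumes "\<And>t. 2 * t * a + t^2 * d \<le> 0" shows "a = 0"
proof -
  define t where "t = a / (\<bar>d\<bar> + 1)"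
  have p: "\<bar>d\<bar> + 1 > 0" by simp
  have "2 * t * a + t^2 * d \<le> 0" by (rule assms)
  hence "(\<bar>d\<bar> + 1)^2 * (2 * t * a + t^2 * d) \<le> 0" by (simp add: mult_nonneg_nonpos)
  also have "(\<bar>d\<bar> + 1)^2 * (2 * t * a + t^2 * d) = 2 * (\<bar>d\<bar> + 1) * (t * (\<bar>d\<bar> + 1)) * a + (t * (\<bar>d\<bar> + 1))^2 * d"
    by (simp add: algebra_simps power2_eq_square)
  also have "t * (\<bar>d\<bar> + 1) = a" unfolding t_def using p by simp
  also have "2 * (\<bar>d\<bar> + 1) * a * a + a^2 * d = a^2 * (2 * (\<bar>d\<bar> + 1) + d)"
    by (simp add: algebra_simps power2_eq_square)
  finally have "a^2 * (2 * (\<bar>d\<bar> + 1) + d) \<le> 0" .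
  moreover have "2 * (\<bar>d\<bar> + 1) + d > 0" by (simp add: abs_if)
  ultimately have "a^2 \<le> 0" by (simp add: mult_le_0_iff)
  thus ?thesis by simp
qed

lemma oeig_step:
  fixes A :: "real^'n^'n"
  assumes sym: "transpose A = A" and E: "oeig A E"
    and w: "w \<noteq> 0" "\<forall>e\<in>E. e \<bullet> w = 0"
  shows "\<exists>e. e \<notin> E \<and> oeig A (insert e E)"
proof -
  define W where "W = {x::real^'n. \<forall>e\<in>E. e \<bullet> x = 0}"
  define K where "K = W \<inter> sphere 0 1"
  define f where "f = (\<lambda>x::real^'n. x \<bullet> (A *v x))"
  have Wlin: "a + b \<in> W" "c *\<^sub>R a \<in> W" "a - b \<in> W" if "a \<in> W" "b \<in> W" for a b c
    using that unfolding W_def by (auto simp: inner_add_right inner_diff_right)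
  have "W = (\<Inter>e\<in>E. {x. e \<bullet> x = 0})" unfolding W_def by auto
  hence "closed W" by (auto intro!: closed_INT closed_hyperplane)
  hence cK: "compact K" unfolding K_def by (intro closed_Int_compact) auto
  have "(1 / norm w) *\<^sub>R w \<in> K" using w unfolding K_def W_def by (auto simp: inner_scaleR_right)
  hence neK: "K \<noteq> {}" by auto
  have "continuous_on K f" unfolding f_def
    by (intro continuous_intros linear_continuous_on bounded_linear_intros) simp_all
  from continuous_attains_sup[OF cK neK this] obtain e where eK: "e \<in> K" and emax: "\<And>y. y \<in> K \<Longrightarrow> f y \<le> f e"
    by blast
  define lam where "lam = f e"
  have eW: "e \<in> W" and ne: "norm e = 1" using eK unfolding K_def by auto
  have ee: "e \<bullet> e = 1" using ne by (simp add: norm_eq_1)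
  have fscale: "f (c *\<^sub>R x) = c^2 * f x" for c x unfolding f_def
    by (simp add: matrix_vector_mult_scaleR power2_eq_square)
  have key: "w' \<bullet> (A *v e) = 0" if w'W: "w' \<in> W" and w'e: "w' \<bullet> e = 0" for w'
  proof -
    have "2 * t * (w' \<bullet> (A *v e)) + t^2 * (f w' - lam * (w' \<bullet> w')) \<le> 0" for t
    proof -
      define z where "z = e + t *\<^sub>R w'"
      have zW: "z \<in> W" unfolding z_def using Wlin eW w'W by blast
      have zz: "z \<bullet> z = 1 + t^2 * (w' \<bullet> w')" unfolding z_def
        using ee w'e by (simp add: inner_add_left inner_add_right inner_commute power2_eq_square)
      have zpos: "z \<bullet> z > 0" unfolding zz by (simp add: add_pos_nonneg)
      hence nz: "norm z > 0" by (simp add: inner_gt_zero_iff)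
      have "(1 / norm z) *\<^sub>R z \<in> K" unfolding K_def using Wlin(2)[OF zW zW] nz by auto
      hence "f ((1 / norm z) *\<^sub>R z) \<le> lam" using emax unfolding lam_def by blast
      hence "f z / (norm z)^2 \<le> lam" by (simp add: fscale power_divide)
      hence "f z \<le> lam * (norm z)^2" using nz by (simp add: divide_le_eq)
      also have "(norm z)^2 = z \<bullet> z" by (simp add: power2_norm_eq_inner)
      finally have fz: "f z \<le> lam * (z \<bullet> z)" .
      have "e \<bullet> (A *v w') = w' \<bullet> (A *v e)" using sym_inner[OF sym, of e w'] by (simp add: inner_commute)
      hence "f z = lam + 2 * t * (w' \<bullet> (A *v e)) + t^2 * f w'"
        unfolding z_def lam_def f_def
        by (simp add: inner_add_left inner_add_right matrix_vector_right_distrib matrix_vector_mult_scaleR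
            power2_eq_square algebra_simps)
      with fz zz show ?thesis by (simp add: algebra_simps)
    qed
    then show ?thesis by (rule quad_zero)
  qed
  have Ae: "A *v e = lam *\<^sub>R e"
  proof (rule inner_all_eq)
    fix y :: "real^'n"
    define p where "p = (\<Sum>e'\<in>E. (e' \<bullet> y) *\<^sub>R e')"
    define q where "q = y - p"
    have qW: "q \<in> W" unfolding W_def q_def p_def using oeig_inner_sum[OF E] by (simp add: inner_diff_right)
    define q' where "q' = q - (q \<bullet> e) *\<^sub>R e"
    have q'W: "q' \<in> W" unfolding q'_def using Wlin qW eW by blast
    have "q' \<bullet> e = 0" unfolding q'_def using ee by (simp add: inner_diff_left)
    hence k: "q' \<bullet> (A *v e) = 0" using key q'W by blast
    have q_part: "q \<bullet> (A *v e) = q \<bullet> (lam *\<^sub>R e)"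
    proof -
      have "q = q' + (q \<bullet> e) *\<^sub>R e" unfolding q'_def by simp
      hence "q \<bullet> (A *v e) = q' \<bullet> (A *v e) + (q \<bullet> e) * lam"
        unfolding lam_def f_def by (metis inner_add_left inner_scaleR_left)
      also have "q \<bullet> (lam *\<^sub>R e) = (q \<bullet> e) * lam" by simp
      ultimately show ?thesis using k by simp
    qed
    have p_part: "p \<bullet> (A *v e) = p \<bullet> (lam *\<^sub>R e)"
    proof -
      have "e' \<bullet> (A *v e) = 0 \<and> e' \<bullet> e = 0" if "e' \<in> E" for e'
      proof -
        have "e' \<bullet> e = 0" using eW that unfolding W_def by (simp add: inner_commute)
        moreover have "A *v e' = (e' \<bullet> (A *v e')) *\<^sub>R e'" using E that unfolding oeig_def by blast
        moreover have "e \<bullet> (A *v e') = (e' \<bullet> (A *v e')) * (e \<bullet> e')"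
          using \<open>A *v e' = _\<close> by (metis inner_scaleR_right)
        ultimately show ?thesis using sym_inner[OF sym, of e' e] by (simp add: inner_commute)
      qed
      then show ?thesis unfolding p_def by (simp add: inner_sum_left)
    qed
    have "y = p + q" unfolding q_def by simp
    then show "y \<bullet> (A *v e) = y \<bullet> (lam *\<^sub>R e)" using p_part q_part by (simp add: inner_add_left distrib_left)
  qed
  have eE: "e \<notin> E"
  proof
    assume "e \<in> E" then have "e \<bullet> e = 0" using eW unfolding W_def by blast
    with ee show False by simp
  qed
  have "oeig A (insert e E)"
    unfolding oeig_def
  proof (intro conjI ballI impI)
    show "finite (insert e E)" using E unfolding oeig_def by simp
  next
    fix x assume "x \<in> insert e E"
    then show "norm x = 1" using ne E unfolding oeig_def by auto
  next
    fix x assume "x \<in> insert e E"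
    then show "A *v x = (x \<bullet> (A *v x)) *\<^sub>R x"
    proof
      assume "x = e" then show ?thesis using Ae ee by simp
    next
      assume "x \<in> E" then show ?thesis using E unfolding oeig_def by blast
    qed
  next
    fix x y assume "x \<in> insert e E" "y \<in> insert e E" "x \<noteq> y"
    then show "x \<bullet> y = 0" using E eW unfolding oeig_def W_def by (auto simp: inner_commute)
  qed
  with eE show ?thesis by blast
qed

lemma oeig_full:
  fixes A :: "real^'n^'n"
  assumes sym: "transpose A = A"
  shows "\<exists>E. oeig A E \<and> (\<forall>x. (\<forall>e\<in>E. e \<bullet> x = 0) \<longrightarrow> x = 0)"
proof -
  have "\<forall>E. oeig A E \<and> card E + d = CARD('n) \<longrightarrow> (\<exists>E'. oeig A E' \<and> (\<forall>x. (\<forall>e\<in>E'. e \<bullet> x = 0) \<longrightarrow> x = 0))" for d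
  proof (induction d)
    case 0
    show ?case
    proof (intro allI impI)
      fix E assume H: "oeig A E \<and> card E + 0 = CARD('n)"
      show "\<exists>E'. oeig A E' \<and> (\<forall>x. (\<forall>e\<in>E'. e \<bullet> x = 0) \<longrightarrow> x = 0)"
      proof (rule exI[of _ E], intro conjI allI impI)
        show "oeig A E" using H by simp
        fix x assume x: "\<forall>e\<in>E. e \<bullet> x = 0"
        show "x = 0"
        proof (rule ccontr)
          assume "x \<noteq> 0"
          from oeig_step[OF sym _ this x] H obtain e where "e \<notin> E" "oeig A (insert e E)" by blast
          moreover have "finite E" using H unfolding oeig_def by simp
          ultimately have "card (insert e E) = CARD('n) + 1" using H by simp
          with oeig_card[OF \<open>oeig A (insert e E)\<close>] show False by simp
        qed
      qed
    qed
  next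
    case (Suc d)
    show ?case
    proof (intro allI impI)
      fix E assume H: "oeig A E \<and> card E + Suc d = CARD('n)"
      show "\<exists>E'. oeig A E' \<and> (\<forall>x. (\<forall>e\<in>E'. e \<bullet> x = 0) \<longrightarrow> x = 0)"
      proof (cases "\<forall>x. (\<forall>e\<in>E. e \<bullet> x = 0) \<longrightarrow> x = 0")
        case True then show ?thesis using H by blast
      next
        case False
        then obtain x where x: "\<forall>e\<in>E. e \<bullet> x = 0" "x \<noteq> 0" by blast
        from oeig_step[OF sym _ x(2) x(1)] H obtain e where "e \<notin> E" "oeig A (insert e E)" by blast
        moreover have "finite E" using H unfolding oeig_def by simp
        ultimately have "oeig A (insert e E) \<and> card (insert e E) + d = CARD('n)" using H by simp
        then show ?thesis using Suc.IH by blast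
      qed
    qed
  qed
  moreover have "oeig A {}" unfolding oeig_def by simp
  ultimately show ?thesis by (metis card.empty add_0)
qed


lemma mat_sqrt_props:
  fixes A :: "real^'n^'n"
  assumes spd: "sym_pos_def A"
  shows "transpose (mat_sqrt A) = mat_sqrt A \<and> mat_sqrt A ** mat_sqrt A = A"
proof -
  have sym: "transpose A = A" and pd: "\<And>x. x \<noteq> 0 \<Longrightarrow> x \<bullet> (A *v x) > 0"
    using spd unfolding sym_pos_def_def by auto
  obtain E where E: "oeig A E" and full: "\<And>x. (\<forall>e\<in>E. e \<bullet> x = 0) \<Longrightarrow> x = 0"
    using oeig_full[OF sym] by blast
  have finE: "finite E" using E unfolding oeig_def by simp
  have expn: "x = (\<Sum>e\<in>E. (e \<bullet> x) *\<^sub>R e)" for x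
  proof -
    have "x - (\<Sum>e\<in>E. (e \<bullet> x) *\<^sub>R e) = 0"
      by (rule full) (simp add: inner_diff_right oeig_inner_sum[OF E])
    thus ?thesis by simp
  qed
  define lam where "lam = (\<lambda>e. e \<bullet> (A *v e))"
  have eig: "A *v e = lam e *\<^sub>R e" if "e \<in> E" for e
    using E that unfolding oeig_def lam_def by blast
  have lpos: "lam e > 0" if "e \<in> E" for e
  proof -
    have "e \<noteq> 0" using E that unfolding oeig_def by force
    thus ?thesis unfolding lam_def using pd by blast
  qed
  have lnn: "0 \<le> lam e" if "e \<in> E" for e using lpos[OF that] by simp
  have sq: "sqrt (lam e) * sqrt (lam e) = lam e" if "e \<in> E" for e
    using lpos[OF that] by simp
  define s where "s = (\<lambda>x. \<Sum>e\<in>E. (sqrt (lam e) * (e \<bullet> x)) *\<^sub>R e)"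
  have s_app: "s y = (\<Sum>e\<in>E. (sqrt (lam e) * (e \<bullet> y)) *\<^sub>R e)" for y by (simp add: s_def)
  have lin: "linear s"
    by (rule linearI) (simp_all add: s_def inner_add_right distrib_left scaleR_add_left sum.distrib
        scaleR_sum_right algebra_simps)
  define S where "S = matrix s"
  have Sx: "S *v x = s x" for x unfolding S_def using matrix_vector_mul(2)[OF lin] by metis
  have es: "e \<bullet> s x = sqrt (lam e) * (e \<bullet> x)" if "e \<in> E" for e x
    unfolding s_def using oeig_inner_sum[OF E that] by simp
  have Ax: "A *v x = (\<Sum>e\<in>E. (lam e * (e \<bullet> x)) *\<^sub>R e)" for x
  proof -
    have "A *v x = A *v (\<Sum>e\<in>E. (e \<bullet> x) *\<^sub>R e)" by (rule arg_cong[where f="\<lambda>v. A *v v"], rule expn)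
    also have "\<dots> = (\<Sum>e\<in>E. (e \<bullet> x) *\<^sub>R (A *v e))" by (simp add: vec.sum matrix_vector_mult_scaleR)
    also have "\<dots> = (\<Sum>e\<in>E. (lam e * (e \<bullet> x)) *\<^sub>R e)"
      by (rule sum.cong) (simp_all add: eig)
    finally show ?thesis .
  qed
  have SS: "S ** S = A"
  proof -
    have "(S ** S) *v x = A *v x" for x
    proof -
      have "(S ** S) *v x = s (s x)" by (simp add: Sx matrix_vector_mul_assoc[symmetric])
      also have "\<dots> = (\<Sum>e\<in>E. (lam e * (e \<bullet> x)) *\<^sub>R e)"
        apply (subst s_app)
        by (rule sum.cong) (use lpos in \<open>simp_all add: es less_imp_le\<close>)
      finally show ?thesis using Ax by simp
    qed
    thus ?thesis by (simp add: matrix_eq)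
  qed
  have ssym: "y \<bullet> s x = x \<bullet> s y" for x y
    unfolding s_def by (simp add: inner_sum_right algebra_simps inner_commute)
  have St: "transpose S = S"
  proof -
    have "transpose S *v x = S *v x" for x
    proof (rule inner_all_eq)
      fix y
      have "transpose S *v x = x v* S" by (metis transpose_transpose vector_transpose_matrix)
      hence "y \<bullet> (transpose S *v x) = x \<bullet> (S *v y)" by (metis inner_commute dot_lmul_matrix)
      also have "\<dots> = y \<bullet> (S *v x)" using ssym by (simp add: Sx)
      finally show "y \<bullet> (transpose S *v x) = y \<bullet> (S *v x)" .
    qed
    thus ?thesis by (simp add: matrix_eq)
  qed
  have Spd: "x \<bullet> (S *v x) > 0" if "x \<noteq> 0" for x
  proof -
    obtain e where eE: "e \<in> E" and ex: "e \<bullet> x \<noteq> 0" using full \<open>x \<noteq> 0\<close> by blast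
    have xs: "x \<bullet> s x = (\<Sum>e\<in>E. sqrt (lam e) * (e \<bullet> x)^2)"
      unfolding s_def by (simp add: inner_sum_right power2_eq_square inner_commute algebra_simps)
    have "0 < sqrt (lam e) * (e \<bullet> x)^2" using lpos[OF eE] ex by simp
    also have "\<dots> \<le> (\<Sum>e\<in>E. sqrt (lam e) * (e \<bullet> x)^2)"
      by (rule member_le_sum) (use eE finE lnn in \<open>auto intro!: mult_nonneg_nonneg\<close>)
    finally show ?thesis using xs Sx by simp
  qed
  have P: "sym_pos_def S \<and> S ** S = A" using St Spd SS unfolding sym_pos_def_def by blast
  have uniq: "T = S" if T: "sym_pos_def T \<and> T ** T = A" for T
  proof -
    have Tpd: "\<And>x. x \<noteq> 0 \<Longrightarrow> x \<bullet> (T *v x) > 0" using T unfolding sym_pos_def_def by auto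
    have Te: "T *v e = sqrt (lam e) *\<^sub>R e" if eE: "e \<in> E" for e
    proof (rule ccontr)
      define \<mu> where "\<mu> = sqrt (lam e)"
      define z where "z = T *v e - \<mu> *\<^sub>R e"
      assume "T *v e \<noteq> sqrt (lam e) *\<^sub>R e"
      hence nz: "z \<noteq> 0" unfolding z_def \<mu>_def by simp
      have TT: "T *v (T *v e) = lam e *\<^sub>R e" using T eig[OF eE] by (simp add: matrix_vector_mul_assoc)
      have mm: "\<mu> * \<mu> = lam e" unfolding \<mu>_def using lpos[OF eE] by simp
      have "T *v z + \<mu> *\<^sub>R z = T *v (T *v e) - (\<mu> * \<mu>) *\<^sub>R e"
        unfolding z_def by (simp add: vec.diff matrix_vector_mult_scaleR algebra_simps)
      hence "T *v z + \<mu> *\<^sub>R z = 0" using TT mm by simp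
      hence Tz: "T *v z = - \<mu> *\<^sub>R z" by (simp add: add_eq_0_iff)
      have "z \<bullet> (T *v z) = - \<mu> * (z \<bullet> z)" unfolding Tz by simp
      moreover have "\<mu> \<ge> 0" unfolding \<mu>_def using lnn[OF eE] by simp
      ultimately have "z \<bullet> (T *v z) \<le> 0" by (simp add: mult_nonneg_nonneg)
      with Tpd[OF nz] show False by simp
    qed
    have "T *v x = S *v x" for x
    proof -
      have "T *v x = T *v (\<Sum>e\<in>E. (e \<bullet> x) *\<^sub>R e)" by (rule arg_cong[where f="\<lambda>v. T *v v"], rule expn)
      also have "\<dots> = (\<Sum>e\<in>E. (e \<bullet> x) *\<^sub>R (T *v e))" by (simp add: vec.sum matrix_vector_mult_scaleR)
      also have "\<dots> = s x" unfolding s_def by (rule sum.cong) (simp_all add: Te)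
      finally show ?thesis by (simp add: Sx)
    qed
    thus ?thesis by (simp add: matrix_eq)
  qed
  have "mat_sqrt A = S" unfolding mat_sqrt_def
    by (rule the_equality) (use P uniq in blast)+
  with St SS show ?thesis by simp
qed



definition lipb :: "real \<Rightarrow> (real^'n \<Rightarrow> real^'n) \<Rightarrow> bool" where
  "lipb \<beta> F \<longleftrightarrow> (\<exists>c>0. \<forall>u v. norm (F u - F v) \<le> c * (1 + norm u powr \<beta> + norm v powr \<beta>) * norm (u - v))"

lemma pow_le:
  fixes x a b :: real assumes "0 \<le> a" "a \<le> b" "0 \<le> x"
  shows "x powr a \<le> 1 + x powr b"
proof (cases "x \<le> 1")
  case True
  hence "x powr a \<le> 1" using assms by (simp add: powr_le1)
  moreover have "0 \<le> x powr b" by simp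
  ultimately show ?thesis by linarith
next
  case False
  hence "x powr a \<le> x powr b" using assms by (intro powr_mono) auto
  thus ?thesis by simp
qed

lemma pow_sum_le:
  fixes u v :: "real^'n" assumes "0 \<le> a" "a \<le> b"
  shows "norm u powr a + norm v powr a \<le> 2 * (1 + norm u powr b + norm v powr b)"
  using pow_le[OF assms norm_ge_zero[of u]] pow_le[OF assms norm_ge_zero[of v]]
    powr_ge_zero[of "norm u" b] powr_ge_zero[of "norm v" b] by (simp only: distrib_left)

lemma lipb_add:
  assumes "lipb \<beta> F" "lipb \<beta> G" shows "lipb \<beta> (\<lambda>u. F u + G u)"
proof -
  obtain c1 where c1: "c1 > 0" "\<And>u v. norm (F u - F v) \<le> c1 * (1 + norm u powr \<beta> + norm v powr \<beta>) * norm (u - v)"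
    using assms(1) unfolding lipb_def by blast
  obtain c2 where c2: "c2 > 0" "\<And>u v. norm (G u - G v) \<le> c2 * (1 + norm u powr \<beta> + norm v powr \<beta>) * norm (u - v)"
    using assms(2) unfolding lipb_def by blast
  show ?thesis unfolding lipb_def
  proof (intro exI[of _ "c1 + c2"] conjI allI)
    show "c1 + c2 > 0" using c1 c2 by simp
    fix u v :: "real^'a"
    have "norm (F u + G u - (F v + G v)) \<le> norm (F u - F v) + norm (G u - G v)"
      by (metis add_diff_add norm_triangle_ineq)
    also have "\<dots> \<le> c1 * (1 + norm u powr \<beta> + norm v powr \<beta>) * norm (u - v) + c2 * (1 + norm u powr \<beta> + norm v powr \<beta>) * norm (u - v)"
      using c1 c2 by (intro add_mono) auto
    finally show "norm (F u + G u - (F v + G v)) \<le> (c1 + c2) * (1 + norm u powr \<beta> + norm v powr \<beta>) * norm (u - v)"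
      by (simp add: algebra_simps)
  qed
qed

lemma lipb_sum:
  fixes N :: nat and f :: "nat \<Rightarrow> real^'n \<Rightarrow> real^'n"
  assumes "\<And>k. k \<le> N \<Longrightarrow> lipb \<beta> (f k)"
  shows "lipb \<beta> (\<lambda>u. \<Sum>k\<le>N. f k u)"
  using assms
proof (induction N)
  case 0 then show ?case by simp
next
  case (Suc N)
  have "lipb \<beta> (\<lambda>u. (\<Sum>k\<le>N. f k u) + f (Suc N) u)"
    using Suc by (intro lipb_add) auto
  then show ?case by simp
qed

lemma mat_bound:
  fixes M :: "real^'n^'m"
  obtains K where "K > 0" "\<And>x. norm (M *v x) \<le> K * norm x"
  using linear_bounded_pos[of "\<lambda>x. M *v x"] by auto

lemma lipb_mat:
  fixes M :: "real^'n^'n"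
  assumes "lipb \<beta> h" shows "lipb \<beta> (\<lambda>u. M *v h u)"
proof -
  obtain c where c: "c > 0" "\<And>u v. norm (h u - h v) \<le> c * (1 + norm u powr \<beta> + norm v powr \<beta>) * norm (u - v)"
    using assms unfolding lipb_def by blast
  obtain K where K: "K > 0" "\<And>x. norm (M *v x) \<le> K * norm x" using mat_bound by blast
  show ?thesis unfolding lipb_def
  proof (intro exI[of _ "K * c"] conjI allI)
    show "K * c > 0" using K c by simp
    fix u v :: "real^'n"
    have "norm (M *v h u - M *v h v) = norm (M *v (h u - h v))" by (simp add: vec.diff)
    also have "\<dots> \<le> K * norm (h u - h v)" by (rule K)
    also have "\<dots> \<le> K * (c * (1 + norm u powr \<beta> + norm v powr \<beta>) * norm (u - v))"
      using K c by (intro mult_left_mono) auto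
    finally show "norm (M *v h u - M *v h v) \<le> K * c * (1 + norm u powr \<beta> + norm v powr \<beta>) * norm (u - v)"
      by (simp add: algebra_simps)
  qed
qed

lemma lipb_lin:
  fixes M :: "real^'n^'n"
  shows "lipb \<beta> (\<lambda>u. M *v u)"
proof -
  obtain K where K: "K > 0" "\<And>x. norm (M *v x) \<le> K * norm x" using mat_bound by blast
  show ?thesis unfolding lipb_def
  proof (intro exI[of _ K] conjI allI)
    show "K > 0" by fact
    fix u v :: "real^'n"
    have "norm (M *v u - M *v v) \<le> K * norm (u - v)" using K(2)[of "u - v"] by (simp add: vec.diff)
    also have "\<dots> \<le> K * (1 + norm u powr \<beta> + norm v powr \<beta>) * norm (u - v)"
    proof -
      have "1 \<le> 1 + norm u powr \<beta> + norm v powr \<beta>" by simp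
      hence "K * 1 \<le> K * (1 + norm u powr \<beta> + norm v powr \<beta>)" using K by (intro mult_left_mono) auto
      thus ?thesis by (intro mult_right_mono) auto
    qed
    finally show "norm (M *v u - M *v v) \<le> K * (1 + norm u powr \<beta> + norm v powr \<beta>) * norm (u - v)" .
  qed
qed

lemma lipb_gM:
  fixes M :: "real^'n^'n"
  assumes "0 < \<alpha>" "\<alpha> \<le> \<beta>"
  shows "lipb \<beta> (\<lambda>u. norm (M *v u) powr \<alpha> *\<^sub>R (M *v u))"
proof -
  obtain K where K: "K > 0" "\<And>x. norm (M *v x) \<le> K * norm x" using mat_bound by blast
  show ?thesis unfolding lipb_def
  proof (intro exI[of _ "(2 + \<alpha>) * K powr \<alpha> * 2 * K"] conjI allI)
    show "(2 + \<alpha>) * K powr \<alpha> * 2 * K > 0" using K assms by simp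
    fix u v :: "real^'n"
    have pw: "norm (M *v x) powr \<alpha> \<le> K powr \<alpha> * norm x powr \<alpha>" for x
    proof -
      have "norm (M *v x) powr \<alpha> \<le> (K * norm x) powr \<alpha>" using K assms by (intro powr_mono2) auto
      also have "\<dots> = K powr \<alpha> * norm x powr \<alpha>" using K by (simp add: powr_mult)
      finally show ?thesis .
    qed
    have "norm (norm (M *v u) powr \<alpha> *\<^sub>R (M *v u) - norm (M *v v) powr \<alpha> *\<^sub>R (M *v v))
        \<le> (2 + \<alpha>) * (norm (M *v u) powr \<alpha> + norm (M *v v) powr \<alpha>) * norm (M *v u - M *v v)"
      by (rule g_bound[OF assms(1)])
    also have "\<dots> \<le> (2 + \<alpha>) * (K powr \<alpha> * (norm u powr \<alpha> + norm v powr \<alpha>)) * (K * norm (u - v))"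
    proof (intro mult_mono mult_left_mono)
      show "norm (M *v u) powr \<alpha> + norm (M *v v) powr \<alpha> \<le> K powr \<alpha> * (norm u powr \<alpha> + norm v powr \<alpha>)"
        using pw[of u] pw[of v] by (simp add: distrib_left)
      show "norm (M *v u - M *v v) \<le> K * norm (u - v)" using K(2)[of "u - v"] by (simp add: vec.diff)
    qed (use assms K in auto)
    also have "\<dots> \<le> (2 + \<alpha>) * (K powr \<alpha> * (2 * (1 + norm u powr \<beta> + norm v powr \<beta>))) * (K * norm (u - v))"
      using pow_sum_le[of \<alpha> \<beta> u v] assms K
      by (intro mult_right_mono mult_left_mono) auto
    finally show "norm (norm (M *v u) powr \<alpha> *\<^sub>R (M *v u) - norm (M *v v) powr \<alpha> *\<^sub>R (M *v v))
        \<le> (2 + \<alpha>) * K powr \<alpha> * 2 * K * (1 + norm u powr \<beta> + norm v powr \<beta>) * norm (u - v)"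
      by (simp add: algebra_simps)
  qed
qed

lemma lipb_F_map:
  fixes A :: "real^'n^'n"
  assumes "0 \<le> \<alpha>" "\<alpha> \<le> \<beta>"
  shows "lipb \<beta> (F_map A \<alpha>)"
proof (cases "\<alpha> > 0")
  case True
  have "lipb \<beta> (\<lambda>u. norm (mat 1 *v u) powr \<alpha> *\<^sub>R (mat 1 *v u))"
    using True assms by (intro lipb_gM) auto
  hence "lipb \<beta> (\<lambda>u. A *v (norm (mat 1 *v u) powr \<alpha> *\<^sub>R (mat 1 *v u)))" by (rule lipb_mat)
  moreover have "F_map A \<alpha> = (\<lambda>u. A *v (norm (mat 1 *v u) powr \<alpha> *\<^sub>R (mat 1 *v u)))"
    using True by (simp add: fun_eq_iff F_map_def matrix_vector_mult_scaleR)
  ultimately show ?thesis by simp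
next
  case False
  hence "F_map A \<alpha> = (\<lambda>u. A *v u)" by (simp add: fun_eq_iff F_map_def)
  then show ?thesis using lipb_lin by metis
qed

lemma lipb_Ft_map:
  fixes A :: "real^'n^'n"
  assumes "0 \<le> \<alpha>" "\<alpha> \<le> \<beta>" "sym_pos_def A"
  shows "lipb \<beta> (Ft_map A \<alpha>)"
proof (cases "\<alpha> > 0")
  case True
  define M where "M = mat_sqrt A"
  have MM: "M ** M = A" using mat_sqrt_props[OF assms(3)] unfolding M_def by simp
  have "lipb \<beta> (\<lambda>u. norm (M *v u) powr \<alpha> *\<^sub>R (M *v u))"
    using True assms by (intro lipb_gM) auto
  hence "lipb \<beta> (\<lambda>u. M *v (norm (M *v u) powr \<alpha> *\<^sub>R (M *v u)))" by (rule lipb_mat)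
  moreover have "Ft_map A \<alpha> = (\<lambda>u. M *v (norm (M *v u) powr \<alpha> *\<^sub>R (M *v u)))"
    using True MM by (auto simp: fun_eq_iff Ft_map_def matrix_vector_mult_scaleR M_def[symmetric]
        matrix_vector_mul_assoc)
  ultimately show ?thesis by simp
next
  case False
  hence "Ft_map A \<alpha> = (\<lambda>u. A *v u)" by (simp add: fun_eq_iff Ft_map_def)
  then show ?thesis using lipb_lin by metis
qed



lemma qreal:
  fixes P Q a b d K :: real
  assumes "0 < b" "b \<le> a" "\<bar>P - Q\<bar> \<le> 2 * K * a * d" "\<bar>Q\<bar> \<le> K * b^2" "\<bar>a - b\<bar> \<le> d" "K > 0"
  shows "\<bar>P / a - Q / b\<bar> \<le> 3 * K * d"
proof -
  have a0: "a > 0" using assms by simp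
  have d0: "d \<ge> 0" using assms(5) by simp
  have e: "P / a - Q / b = (P - Q) / a + Q * (b - a) / (a * b)" using a0 assms(1) by (simp add: field_simps)
  have 1: "\<bar>(P - Q) / a\<bar> \<le> 2 * K * d"
  proof -
    have "\<bar>(P - Q) / a\<bar> = \<bar>P - Q\<bar> / a" using a0 by (simp add: abs_divide)
    also have "\<dots> \<le> (2 * K * a * d) / a" using a0 assms(3) by (intro divide_right_mono) auto
    also have "\<dots> = 2 * K * d" using a0 by simp
    finally show ?thesis .
  qed
  have 2: "\<bar>Q * (b - a) / (a * b)\<bar> \<le> K * d"
  proof -
    have "\<bar>Q * (b - a)\<bar> \<le> K * b^2 * d"
      unfolding abs_mult using assms by (intro mult_mono) (auto simp: abs_minus_commute)
    also have "\<dots> \<le> K * d * (a * b)"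
      using assms d0 by (simp add: power2_eq_square mult_left_mono mult_right_mono algebra_simps
          mult_nonneg_nonneg)
    finally have "\<bar>Q * (b - a)\<bar> \<le> K * d * (a * b)" .
    moreover have "a * b > 0" using a0 assms(1) by simp
    ultimately show ?thesis by (simp add: abs_divide divide_le_eq)
  qed
  show ?thesis unfolding e using 1 2 abs_triangle_ineq[of "(P - Q) / a" "Q * (b - a) / (a * b)"] by linarith
qed

definition qf :: "real^'n^'n \<Rightarrow> real^'n \<Rightarrow> real" where
  "qf M u = (if u = 0 then 0 else u \<bullet> (M *v u) / norm u)"

lemma quad_bound:
  fixes M :: "real^'n^'n"
  assumes K: "\<And>x. norm (M *v x) \<le> K * norm x"
  shows "\<bar>u \<bullet> (M *v w)\<bar> \<le> K * norm u * norm w"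
proof -
  have "\<bar>u \<bullet> (M *v w)\<bar> \<le> norm u * norm (M *v w)" by (rule Cauchy_Schwarz_ineq2)
  also have "\<dots> \<le> norm u * (K * norm w)" by (intro mult_left_mono K) simp
  finally show ?thesis by (simp add: algebra_simps)
qed

lemma qf_bound:
  fixes M :: "real^'n^'n"
  assumes K: "\<And>x. norm (M *v x) \<le> K * norm x"
  shows "\<bar>qf M u\<bar> \<le> K * norm u"
proof (cases "u = 0")
  case True then show ?thesis by (simp add: qf_def)
next
  case False
  have "\<bar>qf M u\<bar> = \<bar>u \<bullet> (M *v u)\<bar> / norm u" using False by (simp add: qf_def abs_divide)
  also have "\<dots> \<le> (K * norm u * norm u) / norm u" by (intro divide_right_mono quad_bound K) simp
  also have "\<dots> = K * norm u" using False by simp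
  finally show ?thesis .
qed

lemma qf_lip_aux:
  fixes M :: "real^'n^'n"
  assumes K: "K > 0" "\<And>x. norm (M *v x) \<le> K * norm x" and uv: "norm v \<le> norm u"
  shows "\<bar>qf M u - qf M v\<bar> \<le> 3 * K * norm (u - v)"
proof (cases "v = 0")
  case True
  then show ?thesis using qf_bound[of M K u, OF K(2)] K by (simp add: qf_def)
next
  case False
  hence v0: "norm v > 0" by simp
  hence u0: "u \<noteq> 0" using uv by auto
  have "u \<bullet> (M *v u) - v \<bullet> (M *v v) = (u - v) \<bullet> (M *v u) + v \<bullet> (M *v (u - v))"
    by (simp add: vec.diff inner_diff_left inner_diff_right)
  hence "\<bar>u \<bullet> (M *v u) - v \<bullet> (M *v v)\<bar> \<le> K * norm (u - v) * norm u + K * norm v * norm (u - v)"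
    using quad_bound[OF K(2), of "u - v" u] quad_bound[OF K(2), of v "u - v"] by linarith
  also have "\<dots> \<le> 2 * K * norm u * norm (u - v)"
    using uv K by (simp add: algebra_simps mult_left_mono mult_right_mono)
  finally have 1: "\<bar>u \<bullet> (M *v u) - v \<bullet> (M *v v)\<bar> \<le> 2 * K * norm u * norm (u - v)" .
  have 2: "\<bar>v \<bullet> (M *v v)\<bar> \<le> K * (norm v)^2" using quad_bound[OF K(2), of v v] by (simp add: power2_eq_square algebra_simps)
  have 3: "\<bar>norm u - norm v\<bar> \<le> norm (u - v)" by (rule norm_triangle_ineq3)
  have "\<bar>(u \<bullet> (M *v u)) / norm u - (v \<bullet> (M *v v)) / norm v\<bar> \<le> 3 * K * norm (u - v)"
    by (rule qreal[OF v0 uv 1 2 3 K(1)])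
  then show ?thesis using u0 False by (simp add: qf_def)
qed

lemma qf_lip:
  fixes M :: "real^'n^'n"
  assumes K: "K > 0" "\<And>x. norm (M *v x) \<le> K * norm x"
  shows "\<bar>qf M u - qf M v\<bar> \<le> 3 * K * norm (u - v)"
proof (cases "norm v \<le> norm u")
  case True then show ?thesis using qf_lip_aux[OF K] by blast
next
  case False
  then have "\<bar>qf M v - qf M u\<bar> \<le> 3 * K * norm (v - u)" using qf_lip_aux[OF K, of u v] by simp
  then show ?thesis by (simp add: abs_minus_commute norm_minus_commute)
qed

lemma G_B_comp: "G_B As u $ i = qf (As i) u * u $ i"
  by (simp add: G_B_def B_map_def qf_def)

lemma lipb_GB:
  fixes As :: "'n \<Rightarrow> real^'n^'n"
  assumes "1 \<le> \<beta>"
  shows "lipb \<beta> (G_B As)"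
proof -
  have "\<forall>i. \<exists>K>0. \<forall>x. norm (As i *v x) \<le> K * norm x"
    using mat_bound by metis
  then obtain K where K: "\<And>i. K i > 0" "\<And>i x. norm (As i *v x) \<le> K i * norm x" by metis
  define L where "L = (\<Sum>i\<in>UNIV. K i)"
  have KL: "K i \<le> L" for i unfolding L_def by (rule member_le_sum) (use K in \<open>auto intro: less_imp_le\<close>)
  have L0: "L > 0" using KL[of undefined] K(1)[of undefined] by linarith
  show ?thesis unfolding lipb_def
  proof (intro exI[of _ "6 * L"] conjI allI)
    show "6 * L > 0" using L0 by simp
    fix u v :: "real^'n"
    have comp: "\<bar>(G_B As u - G_B As v) $ i\<bar> \<le> 3 * K i * (norm u + norm v) * norm (u - v)" for i
    proof -
      have "(G_B As u - G_B As v) $ i = qf (As i) u * (u $ i - v $ i) + (qf (As i) u - qf (As i) v) * v $ i"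
        by (simp add: G_B_comp algebra_simps)
      hence "\<bar>(G_B As u - G_B As v) $ i\<bar> \<le> \<bar>qf (As i) u\<bar> * \<bar>u $ i - v $ i\<bar> + \<bar>qf (As i) u - qf (As i) v\<bar> * \<bar>v $ i\<bar>"
        by (simp add: abs_mult[symmetric] abs_triangle_ineq)
      also have "\<dots> \<le> (K i * norm u) * norm (u - v) + (3 * K i * norm (u - v)) * norm v"
      proof (intro add_mono mult_mono)
        show "\<bar>qf (As i) u\<bar> \<le> K i * norm u" by (rule qf_bound[OF K(2)])
        show "\<bar>u $ i - v $ i\<bar> \<le> norm (u - v)" using component_le_norm_cart[of "u - v" i] by simp
        show "\<bar>qf (As i) u - qf (As i) v\<bar> \<le> 3 * K i * norm (u - v)" by (rule qf_lip[OF K(1) K(2)])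
        show "\<bar>v $ i\<bar> \<le> norm v" by (rule component_le_norm_cart)
      qed (use K(1)[of i] in \<open>auto intro!: mult_nonneg_nonneg less_imp_le\<close>)
      also have "\<dots> \<le> 3 * K i * (norm u + norm v) * norm (u - v)"
        using K(1)[of i] by (simp add: algebra_simps mult_left_mono mult_right_mono)
      finally show ?thesis .
    qed
    have "norm (G_B As u - G_B As v) \<le> (\<Sum>i\<in>UNIV. \<bar>(G_B As u - G_B As v) $ i\<bar>)" by (rule norm_le_l1_cart)
    also have "\<dots> \<le> (\<Sum>i\<in>UNIV. 3 * K i * (norm u + norm v) * norm (u - v))" by (intro sum_mono comp)
    also have "\<dots> = 3 * L * (norm u + norm v) * norm (u - v)"
      unfolding L_def by (simp add: sum_distrib_right sum_distrib_left algebra_simps)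
    also have "\<dots> \<le> 3 * L * (2 * (1 + norm u powr \<beta> + norm v powr \<beta>)) * norm (u - v)"
    proof -
      have "norm u + norm v \<le> 2 * (1 + norm u powr \<beta> + norm v powr \<beta>)"
        using pow_sum_le[of 1 \<beta> u v] assms by simp
      then show ?thesis using L0 by (intro mult_right_mono mult_left_mono) auto
    qed
    finally show "norm (G_B As u - G_B As v) \<le> 6 * L * (1 + norm u powr \<beta> + norm v powr \<beta>) * norm (u - v)"
      by (simp add: algebra_simps)
  qed
qed



lemma mono_sum:
  fixes f :: "nat \<Rightarrow> real^'n \<Rightarrow> real^'n"
  assumes "\<And>k. k \<in> S \<Longrightarrow> monotone_map (f k)"
  shows "monotone_map (\<lambda>u. \<Sum>k\<in>S. f k u)"
  unfolding monotone_map_def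
proof (intro allI)
  fix u v :: "real^'n"
  have "((\<Sum>k\<in>S. f k u) - (\<Sum>k\<in>S. f k v)) \<bullet> (u - v) = (\<Sum>k\<in>S. (f k u - f k v) \<bullet> (u - v))"
    by (simp add: sum_subtractf[symmetric] inner_sum_left)
  also have "\<dots> \<ge> 0" using assms unfolding monotone_map_def by (intro sum_nonneg) auto
  finally show "((\<Sum>k\<in>S. f k u) - (\<Sum>k\<in>S. f k v)) \<bullet> (u - v) \<ge> 0" .
qed

lemma gm_add:
  assumes "gamma_monotone \<gamma> F" "monotone_map G"
  shows "gamma_monotone \<gamma> (\<lambda>u. F u + G u)" "gamma_monotone \<gamma> (\<lambda>u. G u + F u)"
proof -
  obtain C where C: "C > 0" "\<And>u v. (F u - F v) \<bullet> (u - v) \<ge> C * norm (u - v) powr \<gamma>"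
    using assms(1) unfolding gamma_monotone_def by blast
  have G: "(G u - G v) \<bullet> (u - v) \<ge> 0" for u v using assms(2) unfolding monotone_map_def by blast
  have "(F u + G u - (F v + G v)) \<bullet> (u - v) \<ge> C * norm (u - v) powr \<gamma>" for u v
    using C(2)[of u v] G[of u v] by (simp add: inner_diff_left inner_add_left algebra_simps)
  then show "gamma_monotone \<gamma> (\<lambda>u. F u + G u)" "gamma_monotone \<gamma> (\<lambda>u. G u + F u)"
    unfolding gamma_monotone_def using C(1) by (auto simp: add.commute)
qed

lemma amono_lem:
  fixes \<alpha> :: "nat \<Rightarrow> real"
  assumes alpha_inc: "\<And>k. k < N \<Longrightarrow> \<alpha> k < \<alpha> (Suc k)"
  shows "k \<le> j \<Longrightarrow> j \<le> N \<Longrightarrow> \<alpha> k \<le> \<alpha> j"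
proof (induction j)
  case 0 then show ?case by simp
next
  case (Suc j)
  show ?case
  proof (cases "k = Suc j")
    case True then show ?thesis by simp
  next
    case False
    hence "\<alpha> k \<le> \<alpha> j" using Suc by simp
    moreover have "\<alpha> j < \<alpha> (Suc j)" using Suc.prems alpha_inc by simp
    ultimately show ?thesis by simp
  qed
qed

lemma Fk_lip_lem:
  fixes A :: "real^'n^'n"
  assumes "0 \<le> a" "a \<le> b" "t \<Longrightarrow> sym_pos_def A"
  shows "lipb b (if t then Ft_map A a else F_map A a)"
proof (cases t)
  case True
  then show ?thesis using lipb_Ft_map[OF assms(1,2) assms(3)[OF True]] by simp
next
  case False
  then show ?thesis using lipb_F_map[OF assms(1,2)] by simp
qed

lemma split_sum_lem:
  fixes Fk :: "nat \<Rightarrow> real^'n \<Rightarrow> real^'n"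
  shows "(\<Sum>k\<le>N. Fk k u) = (\<Sum>k<N. Fk k u) + Fk N u"
  by (simp add: lessThan_Suc_atMost[symmetric])

lemma case2_lem:
  fixes Fk :: "nat \<Rightarrow> real^'n \<Rightarrow> real^'n"
  assumes lipk: "\<And>k. k \<le> N \<Longrightarrow> lipb b (Fk k)"
    and mon: "\<forall>k<N. monotone_map (Fk k)" and gmN: "gamma_monotone (b + 2) (Fk N)"
  shows "lipb b (\<lambda>u. \<Sum>k\<le>N. Fk k u) \<and> gamma_monotone (b + 2) (\<lambda>u. \<Sum>k\<le>N. Fk k u)"
proof
  show "lipb b (\<lambda>u. \<Sum>k\<le>N. Fk k u)" by (intro lipb_sum lipk)
  have "gamma_monotone (b + 2) (\<lambda>u. (\<Sum>k<N. Fk k u) + Fk N u)"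
    using mon gmN by (intro gm_add(2) mono_sum) auto
  then show "gamma_monotone (b + 2) (\<lambda>u. \<Sum>k\<le>N. Fk k u)" unfolding split_sum_lem .
qed

lemma case3_lem:
  fixes Fk :: "nat \<Rightarrow> real^'n \<Rightarrow> real^'n" and As :: "'n \<Rightarrow> real^'n^'n"
  assumes lipk: "\<And>k. k \<le> N \<Longrightarrow> lipb b (Fk k)" and b1: "1 \<le> b"
    and mon: "\<forall>k\<le>N. monotone_map (Fk k)" and monG: "monotone_map (G_B As)"
    and gm: "gamma_monotone (b + 2) (Fk N) \<or> gamma_monotone (b + 2) (G_B As)"
  shows "lipb b (\<lambda>u. (\<Sum>k\<le>N. Fk k u) + G_B As u) \<and> gamma_monotone (b + 2) (\<lambda>u. (\<Sum>k\<le>N. Fk k u) + G_B As u)"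
proof
  show "lipb b (\<lambda>u. (\<Sum>k\<le>N. Fk k u) + G_B As u)"
    using b1 by (intro lipb_add lipb_sum lipk lipb_GB)
  have msum: "monotone_map (\<lambda>u. \<Sum>k\<le>N. Fk k u)" using mon by (intro mono_sum) auto
  have msum': "monotone_map (\<lambda>u. \<Sum>k<N. Fk k u)" using mon by (intro mono_sum) auto
  show "gamma_monotone (b + 2) (\<lambda>u. (\<Sum>k\<le>N. Fk k u) + G_B As u)"
    using gm
  proof
    assume g: "gamma_monotone (b + 2) (Fk N)"
    have "gamma_monotone (b + 2) (\<lambda>u. (\<Sum>k<N. Fk k u) + Fk N u)" using gm_add(2)[OF g msum'] .
    hence "gamma_monotone (b + 2) (\<lambda>u. (\<Sum>k\<le>N. Fk k u))" unfolding split_sum_lem .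
    from gm_add(1)[OF this monG] show ?thesis .
  next
    assume g: "gamma_monotone (b + 2) (G_B As)"
    show ?thesis using gm_add(2)[OF g msum] .
  qed
qed

theorem mainTheorem14:
  fixes N :: nat and \<alpha> :: "nat \<Rightarrow> real" and Abar :: "nat \<Rightarrow> real^'n^'n"
    and tilde :: "nat \<Rightarrow> bool" and As :: "'n \<Rightarrow> real^'n^'n" and cs :: nat
  defines "Fk \<equiv> (\<lambda>k. if tilde k then Ft_map (Abar k) (\<alpha> k) else F_map (Abar k) (\<alpha> k))"
  defines "F \<equiv> (if cs = 1 then G_B As
                 else if cs = 2 then (\<lambda>u. \<Sum>k\<le>N. Fk k u)
                 else (\<lambda>u. (\<Sum>k\<le>N. Fk k u) + G_B As u))"
  defines "\<beta> \<equiv> (if cs = 1 then 1 else if cs = 2 then \<alpha> N else max (\<alpha> N) 1)"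
  assumes n2: "CARD('n) \<ge> 2"
    and alpha0: "0 \<le> \<alpha> 0"
    and alpha_inc: "\<And>k. k < N \<Longrightarrow> \<alpha> k < \<alpha> (Suc k)"
    and tilde_spd: "\<And>k. k \<le> N \<Longrightarrow> tilde k \<Longrightarrow> sym_pos_def (Abar k)"
    and As_nz: "\<And>i. As i \<noteq> 0"
    and cases: "cs \<in> {1, 2, 3}"
    and case1: "cs = 1 \<Longrightarrow> gamma_monotone 3 (G_B As)"
    and case2: "cs = 2 \<Longrightarrow> (\<forall>k<N. monotone_map (Fk k)) \<and> \<alpha> N > 0
                              \<and> gamma_monotone (\<alpha> N + 2) (Fk N)"
    and case3: "cs = 3 \<Longrightarrow> (\<forall>k\<le>N. monotone_map (Fk k)) \<and> monotone_map (G_B As)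
                 \<and> (\<alpha> N < 1 \<longrightarrow> gamma_monotone 3 (G_B As))
                 \<and> (\<alpha> N > 1 \<longrightarrow> gamma_monotone (\<alpha> N + 2) (Fk N))
                 \<and> (\<alpha> N = 1 \<longrightarrow> gamma_monotone 3 (Fk N) \<or> gamma_monotone 3 (G_B As))"
  shows "\<exists>c1>0. \<exists>c2>0. \<forall>u v.
           norm (F u - F v) \<le> c1 * (1 + norm u powr \<beta> + norm v powr \<beta>) * norm (u - v)
         \<and> (F u - F v) \<bullet> (u - v) \<ge> c2 * norm (u - v) powr (\<beta> + 2)"
proof -
  have anonneg: "0 \<le> \<alpha> k" if "k \<le> N" for k using amono_lem[where \<alpha>=\<alpha> and N=N, OF alpha_inc, of 0 k] that alpha0 by simp
  have Fk_lip: "lipb b (Fk k)" if "k \<le> N" "\<alpha> N \<le> b" for k b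
    unfolding Fk_def using anonneg[OF that(1)] amono_lem[where \<alpha>=\<alpha> and N=N, OF alpha_inc, of k N] that tilde_spd[OF that(1)]
    by (intro Fk_lip_lem) auto
  have res: "lipb \<beta> F \<and> gamma_monotone (\<beta> + 2) F"
  proof (cases "cs = 1")
    case True
    then show ?thesis using lipb_GB[of 1 As] case1 unfolding F_def \<beta>_def by simp
  next
    case n1: False
    show ?thesis
    proof (cases "cs = 2")
      case True
      have "lipb (\<alpha> N) (\<lambda>u. \<Sum>k\<le>N. Fk k u) \<and> gamma_monotone (\<alpha> N + 2) (\<lambda>u. \<Sum>k\<le>N. Fk k u)"
        using case2[OF True] Fk_lip by (intro case2_lem) auto
      then show ?thesis using True unfolding F_def \<beta>_def by simp
    next
      case False
      with n1 cases have c3: "cs = 3" by auto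
      have H: "\<forall>k\<le>N. monotone_map (Fk k)" "monotone_map (G_B As)"
        "\<alpha> N < 1 \<longrightarrow> gamma_monotone 3 (G_B As)"
        "\<alpha> N > 1 \<longrightarrow> gamma_monotone (\<alpha> N + 2) (Fk N)"
        "\<alpha> N = 1 \<longrightarrow> gamma_monotone 3 (Fk N) \<or> gamma_monotone 3 (G_B As)"
        using case3[OF c3] by auto
      have b: "\<beta> = max (\<alpha> N) 1" using c3 unfolding \<beta>_def by simp
      have g: "gamma_monotone (\<beta> + 2) (Fk N) \<or> gamma_monotone (\<beta> + 2) (G_B As)"
      proof -
        have "\<alpha> N < 1 \<or> \<alpha> N > 1 \<or> \<alpha> N = 1" by linarith
        then show ?thesis using H(3,4,5) b by (auto simp: max_def)
      qed
      have "lipb \<beta> (\<lambda>u. (\<Sum>k\<le>N. Fk k u) + G_B As u) \<and> gamma_monotone (\<beta> + 2) (\<lambda>u. (\<Sum>k\<le>N. Fk k u) + G_B As u)"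
        using Fk_lip b H(1,2) g by (intro case3_lem) auto
      then show ?thesis using c3 unfolding F_def by simp
    qed
  qed
  obtain c1 where c1: "c1 > 0" "\<And>u v. norm (F u - F v) \<le> c1 * (1 + norm u powr \<beta> + norm v powr \<beta>) * norm (u - v)"
    using res unfolding lipb_def by blast
  obtain c2 where c2: "c2 > 0" "\<And>u v. (F u - F v) \<bullet> (u - v) \<ge> c2 * norm (u - v) powr (\<beta> + 2)"
    using res unfolding gamma_monotone_def by blast
  show ?thesis using c1 c2 by blast
qed

thm_deps mainTheorem14

end
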